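(* Let $\Re_1,\Re_2$ be commutative Krasner hyperrings with identity, $\Re=\Re_1\times\Re_2$, $\varphi_i$ a hyperideal reduction and $\gamma_i$ a hyperideal expansion on $L(\Re_i)$ ($i=1,2$), and define $\phi(N_1\times N_2)=\varphi_1(N_1)\times\varphi_2(N_2)$ and $\delta(N_1\times N_2)=\gamma_1(N_1)\times\gamma_2(N_2)$. Then $N$ is a $\phi$-$\delta$-primary hyperideal of $\Re$ in each of the following cases: (i) $N=N_1\times N_2$ where each $N_i$ is a proper hyperideal of $\Re_i$ with $\varphi_i(N_i)=N_i$; (ii) $N=N_1\times\Re_2$ where $N_1$ is a $\gamma_1$-primary hyperideal of $\Re_1$; (iii) $N=\Re_1\times N_2$ where $N_2$ is a $\gamma_2$-primary hyperideal of $\Re_2$; (iv) $N=N_1\times\Re_2$ where $N_1$ is a $\varphi_1$-$\gamma_1$-primary hyperideal of $\Re_1$ and $\varphi_2(\Re_2)=\Re_2$; (v) $N=\Re_1\times N_2$ where $N_2$ is a $\varphi_2$-$\gamma_2$-primary hyperideal of $\Re_2$ and $\varphi_1(\Re_1)=\Re_1$.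
   Context: Krasner hyperring: $(\Re,\oplus)$ canonical hypergroup, $(\Re,\circ)$ commutative semigroup with identity $1\neq0$ and $0$ absorbing, $\circ$ distributive over $\oplus$. Hyperideals: nonempty $N$ with $a\oplus(-b)\subseteq N$, $r\circ a\in N$; $L(\Re)$ the set of hyperideals. $\Re_1\times\Re_2$ has componentwise operations; every hyperideal of it has the form $N_1\times N_2$ with $N_i$ a hyperideal of $\Re_i$ (a product with $\emptyset$ is $\emptyset$). A hyperideal reduction is $\phi:L(\Re)\to L(\Re)\cup\{\emptyset\}$ with $\phi(N)\subseteq N$ and $N\subseteq M\Rightarrow\phi(N)\subseteq\phi(M)$; an expansion is $\delta:L(\Re)\to L(\Re)$ with $N\subseteq\delta(N)$ and monotone. A proper hyperideal $N$ is $\phi$-$\delta$-primary if $a\circ b\in N$, $a\circ b\notin\phi(N)$ imply $a\in N$ or $b\in\delta(N)$; it is $\delta$-primary if $a\circ b\in N$ implies $a\in N$ or $b\in\delta(N)$. *)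

theory Defs
  imports Main
begin

record 'a hyperring =
  hcarrier :: "'a set"
  hadd :: "'a \<Rightarrow> 'a \<Rightarrow> 'a set"
  hmul :: "'a \<Rightarrow> 'a \<Rightarrow> 'a"
  hzero :: 'a
  hone :: 'a
  hneg :: "'a \<Rightarrow> 'a"

definition set_hadd :: "('a, 'm) hyperring_scheme \<Rightarrow> 'a set \<Rightarrow> 'a set \<Rightarrow> 'a set" where
  "set_hadd R A B = (\<Union>x\<in>A. \<Union>y\<in>B. hadd R x y)"

definition canonical_hypergroup :: "('a, 'm) hyperring_scheme \<Rightarrow> bool" where
  "canonical_hypergroup R \<longleftrightarrow>
     (\<forall>x\<in>hcarrier R. \<forall>y\<in>hcarrier R. hadd R x y \<noteq> {} \<and> hadd R x y \<subseteq> hcarrier R) \<and>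
     (\<forall>x\<in>hcarrier R. \<forall>y\<in>hcarrier R. \<forall>z\<in>hcarrier R.
        set_hadd R (hadd R x y) {z} = set_hadd R {x} (hadd R y z)) \<and>
     (\<forall>x\<in>hcarrier R. \<forall>y\<in>hcarrier R. hadd R x y = hadd R y x) \<and>
     hzero R \<in> hcarrier R \<and>
     (\<forall>x\<in>hcarrier R. hadd R (hzero R) x = {x}) \<and>
     (\<forall>x\<in>hcarrier R. hneg R x \<in> hcarrier R \<and> hzero R \<in> hadd R x (hneg R x) \<and>
        (\<forall>y\<in>hcarrier R. hzero R \<in> hadd R x y \<longrightarrow> y = hneg R x)) \<and>
     (\<forall>x\<in>hcarrier R. \<forall>y\<in>hcarrier R. \<forall>z\<in>hcarrier R.
        z \<in> hadd R x y \<longrightarrow> x \<in> hadd R z (hneg R y) \<and> y \<in> hadd R (hneg R x) z)"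

definition krasner_hyperring :: "('a, 'm) hyperring_scheme \<Rightarrow> bool" where
  "krasner_hyperring R \<longleftrightarrow>
     canonical_hypergroup R \<and>
     (\<forall>x\<in>hcarrier R. \<forall>y\<in>hcarrier R. hmul R x y \<in> hcarrier R) \<and>
     (\<forall>x\<in>hcarrier R. \<forall>y\<in>hcarrier R. \<forall>z\<in>hcarrier R.
        hmul R (hmul R x y) z = hmul R x (hmul R y z)) \<and>
     (\<forall>x\<in>hcarrier R. \<forall>y\<in>hcarrier R. hmul R x y = hmul R y x) \<and>
     hone R \<in> hcarrier R \<and> hone R \<noteq> hzero R \<and>
     (\<forall>x\<in>hcarrier R. hmul R (hone R) x = x) \<and>
     (\<forall>x\<in>hcarrier R. hmul R (hzero R) x = hzero R) \<and>
     (\<forall>x\<in>hcarrier R. \<forall>y\<in>hcarrier R. \<forall>z\<in>hcarrier R.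
        hmul R x ` hadd R y z = hadd R (hmul R x y) (hmul R x z))"

definition hyperideal :: "('a, 'm) hyperring_scheme \<Rightarrow> 'a set \<Rightarrow> bool" where
  "hyperideal R N \<longleftrightarrow> N \<noteq> {} \<and> N \<subseteq> hcarrier R \<and>
     (\<forall>a\<in>N. \<forall>b\<in>N. hadd R a (hneg R b) \<subseteq> N) \<and>
     (\<forall>r\<in>hcarrier R. \<forall>a\<in>N. hmul R r a \<in> N)"

definition hprod :: "'a hyperring \<Rightarrow> 'b hyperring \<Rightarrow> ('a \<times> 'b) hyperring" where
  "hprod R1 R2 = \<lparr> hcarrier = hcarrier R1 \<times> hcarrier R2,
     hadd = (\<lambda>x y. hadd R1 (fst x) (fst y) \<times> hadd R2 (snd x) (snd y)),
     hmul = (\<lambda>x y. (hmul R1 (fst x) (fst y), hmul R2 (snd x) (snd y))),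
     hzero = (hzero R1, hzero R2), hone = (hone R1, hone R2),
     hneg = (\<lambda>x. (hneg R1 (fst x), hneg R2 (snd x))) \<rparr>"

definition hyperideal_reduction :: "('a, 'm) hyperring_scheme \<Rightarrow> ('a set \<Rightarrow> 'a set) \<Rightarrow> bool" where
  "hyperideal_reduction R \<phi> \<longleftrightarrow>
     (\<forall>N. hyperideal R N \<longrightarrow> (\<phi> N = {} \<or> hyperideal R (\<phi> N)) \<and> \<phi> N \<subseteq> N) \<and>
     (\<forall>N M. hyperideal R N \<and> hyperideal R M \<and> N \<subseteq> M \<longrightarrow> \<phi> N \<subseteq> \<phi> M)"

definition hyperideal_expansion :: "('a, 'm) hyperring_scheme \<Rightarrow> ('a set \<Rightarrow> 'a set) \<Rightarrow> bool" where
  "hyperideal_expansion R \<delta> \<longleftrightarrow>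
     (\<forall>N. hyperideal R N \<longrightarrow> hyperideal R (\<delta> N) \<and> N \<subseteq> \<delta> N) \<and>
     (\<forall>N M. hyperideal R N \<and> hyperideal R M \<and> N \<subseteq> M \<longrightarrow> \<delta> N \<subseteq> \<delta> M)"

definition phi_delta_primary ::
  "('a, 'm) hyperring_scheme \<Rightarrow> ('a set \<Rightarrow> 'a set) \<Rightarrow> ('a set \<Rightarrow> 'a set) \<Rightarrow> 'a set \<Rightarrow> bool" where
  "phi_delta_primary R \<phi> \<delta> N \<longleftrightarrow> hyperideal R N \<and> N \<noteq> hcarrier R \<and>
     (\<forall>a\<in>hcarrier R. \<forall>b\<in>hcarrier R.
        hmul R a b \<in> N \<and> hmul R a b \<notin> \<phi> N \<longrightarrow> a \<in> N \<or> b \<in> \<delta> N)"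

definition delta_primary ::
  "('a, 'm) hyperring_scheme \<Rightarrow> ('a set \<Rightarrow> 'a set) \<Rightarrow> 'a set \<Rightarrow> bool" where
  "delta_primary R \<delta> N \<longleftrightarrow> hyperideal R N \<and> N \<noteq> hcarrier R \<and>
     (\<forall>a\<in>hcarrier R. \<forall>b\<in>hcarrier R.
        hmul R a b \<in> N \<longrightarrow> a \<in> N \<or> b \<in> \<delta> N)"

end

theory Submission
  imports Defs
begin

lemma carrier_ideal:
  assumes "krasner_hyperring R" shows "hyperideal R (hcarrier R)"
proof -
  have a: "hzero R \<in> hcarrier R" "\<And>x. x \<in> hcarrier R \<Longrightarrow> hneg R x \<in> hcarrier R"
    "\<And>x y. x \<in> hcarrier R \<Longrightarrow> y \<in> hcarrier R \<Longrightarrow> hadd R x y \<subseteq> hcarrier R"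
    "\<And>x y. x \<in> hcarrier R \<Longrightarrow> y \<in> hcarrier R \<Longrightarrow> hmul R x y \<in> hcarrier R"
    using assms unfolding krasner_hyperring_def canonical_hypergroup_def by auto
  show ?thesis unfolding hyperideal_def using a by auto
qed

lemma prod_ideal:
  assumes "hyperideal R1 N1" "hyperideal R2 N2"
  shows "hyperideal (hprod R1 R2) (N1 \<times> N2)"
proof -
  have A1: "hadd R1 a1 (hneg R1 b1) \<subseteq> N1" if "a1 \<in> N1" "b1 \<in> N1" for a1 b1
    using assms that unfolding hyperideal_def by auto
  have A2: "hadd R2 a2 (hneg R2 b2) \<subseteq> N2" if "a2 \<in> N2" "b2 \<in> N2" for a2 b2
    using assms that unfolding hyperideal_def by auto
  have M1: "hmul R1 r1 a1 \<in> N1" if "r1 \<in> hcarrier R1" "a1 \<in> N1" for a1 r1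
    using assms that unfolding hyperideal_def by auto
  have M2: "hmul R2 r2 a2 \<in> N2" if "r2 \<in> hcarrier R2" "a2 \<in> N2" for a2 r2
    using assms that unfolding hyperideal_def by auto
  have "N1 \<noteq> {}" "N2 \<noteq> {}" "N1 \<subseteq> hcarrier R1" "N2 \<subseteq> hcarrier R2"
    using assms unfolding hyperideal_def by auto
  then show ?thesis unfolding hyperideal_def
  proof (intro conjI ballI)
    fix a b assume "a \<in> N1 \<times> N2" "b \<in> N1 \<times> N2"
    then show "hadd (hprod R1 R2) a (hneg (hprod R1 R2) b) \<subseteq> N1 \<times> N2"
      unfolding hprod_def using A1 A2 by (cases a, cases b) (simp add: Sigma_mono)
  next
    fix r a assume "r \<in> hcarrier (hprod R1 R2)" "a \<in> N1 \<times> N2"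
    then show "hmul (hprod R1 R2) r a \<in> N1 \<times> N2"
      unfolding hprod_def using M1 M2 by (cases a, cases r) simp
  qed (auto simp: hprod_def)
qed

lemma prod_proper1:
  assumes "N1 \<noteq> hcarrier R1" "N1 \<subseteq> hcarrier R1" "N2 \<noteq> {}" "N1 \<noteq> {}"
  shows "N1 \<times> N2 \<noteq> hcarrier (hprod R1 R2)"
  using assms unfolding hprod_def by (auto simp: times_eq_iff)

lemma prod_proper2:
  assumes "N2 \<noteq> hcarrier R2" "N2 \<subseteq> hcarrier R2" "N1 \<noteq> {}" "N2 \<noteq> {}"
  shows "N1 \<times> N2 \<noteq> hcarrier (hprod R1 R2)"
  using assms unfolding hprod_def by (auto simp: times_eq_iff)

lemma hprod_simps:
  "hcarrier (hprod R1 R2) = hcarrier R1 \<times> hcarrier R2"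
  "hmul (hprod R1 R2) x y = (hmul R1 (fst x) (fst y), hmul R2 (snd x) (snd y))"
  by (simp_all add: hprod_def)

theorem mainTheorem5:
  fixes R1 :: "'a hyperring" and R2 :: "'b hyperring"
    and \<phi>1 \<gamma>1 :: "'a set \<Rightarrow> 'a set" and \<phi>2 \<gamma>2 :: "'b set \<Rightarrow> 'b set"
    and \<phi> \<delta> :: "('a \<times> 'b) set \<Rightarrow> ('a \<times> 'b) set"
  assumes "krasner_hyperring R1" and "krasner_hyperring R2"
    and "hyperideal_reduction R1 \<phi>1" and "hyperideal_reduction R2 \<phi>2"
    and "hyperideal_expansion R1 \<gamma>1" and "hyperideal_expansion R2 \<gamma>2"
    and "\<phi> = (\<lambda>N. \<phi>1 (fst ` N) \<times> \<phi>2 (snd ` N))"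
    and "\<delta> = (\<lambda>N. \<gamma>1 (fst ` N) \<times> \<gamma>2 (snd ` N))"
  shows
    "(\<forall>N1 N2. hyperideal R1 N1 \<and> N1 \<noteq> hcarrier R1 \<and> \<phi>1 N1 = N1 \<and>
              hyperideal R2 N2 \<and> N2 \<noteq> hcarrier R2 \<and> \<phi>2 N2 = N2 \<longrightarrow>
              phi_delta_primary (hprod R1 R2) \<phi> \<delta> (N1 \<times> N2)) \<and>
     (\<forall>N1. delta_primary R1 \<gamma>1 N1 \<longrightarrow>
              phi_delta_primary (hprod R1 R2) \<phi> \<delta> (N1 \<times> hcarrier R2)) \<and>
     (\<forall>N2. delta_primary R2 \<gamma>2 N2 \<longrightarrow>
              phi_delta_primary (hprod R1 R2) \<phi> \<delta> (hcarrier R1 \<times> N2)) \<and>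
     (\<forall>N1. phi_delta_primary R1 \<phi>1 \<gamma>1 N1 \<and> \<phi>2 (hcarrier R2) = hcarrier R2 \<longrightarrow>
              phi_delta_primary (hprod R1 R2) \<phi> \<delta> (N1 \<times> hcarrier R2)) \<and>
     (\<forall>N2. phi_delta_primary R2 \<phi>2 \<gamma>2 N2 \<and> \<phi>1 (hcarrier R1) = hcarrier R1 \<longrightarrow>
              phi_delta_primary (hprod R1 R2) \<phi> \<delta> (hcarrier R1 \<times> N2))"
proof -
  have C1: "hyperideal R1 (hcarrier R1)" and C2: "hyperideal R2 (hcarrier R2)"
    using assms(1,2) carrier_ideal by auto
  have ne1: "hcarrier R1 \<noteq> {}" and ne2: "hcarrier R2 \<noteq> {}"
    using C1 C2 unfolding hyperideal_def by auto
  have g1: "\<And>N. hyperideal R1 N \<Longrightarrow> N \<subseteq> \<gamma>1 N" and g2: "\<And>N. hyperideal R2 N \<Longrightarrow> N \<subseteq> \<gamma>2 N"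
    using assms(5,6) unfolding hyperideal_expansion_def by auto
  have P1: "\<forall>N1 N2. hyperideal R1 N1 \<and> N1 \<noteq> hcarrier R1 \<and> \<phi>1 N1 = N1 \<and>
              hyperideal R2 N2 \<and> N2 \<noteq> hcarrier R2 \<and> \<phi>2 N2 = N2 \<longrightarrow>
              phi_delta_primary (hprod R1 R2) \<phi> \<delta> (N1 \<times> N2)"
  proof (intro allI impI)
    fix N1 N2 assume h: "hyperideal R1 N1 \<and> N1 \<noteq> hcarrier R1 \<and> \<phi>1 N1 = N1 \<and>
              hyperideal R2 N2 \<and> N2 \<noteq> hcarrier R2 \<and> \<phi>2 N2 = N2"
    have ne: "N1 \<noteq> {}" "N2 \<noteq> {}" "N1 \<subseteq> hcarrier R1" using h unfolding hyperideal_def by auto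
    have "\<phi> (N1 \<times> N2) = N1 \<times> N2" using h ne assms(7) by simp
    then show "phi_delta_primary (hprod R1 R2) \<phi> \<delta> (N1 \<times> N2)"
      unfolding phi_delta_primary_def using h ne prod_ideal[of R1 N1 R2 N2] prod_proper1[of N1 R1 N2 R2] by auto
  qed
  have P2: "\<forall>N1. delta_primary R1 \<gamma>1 N1 \<longrightarrow>
              phi_delta_primary (hprod R1 R2) \<phi> \<delta> (N1 \<times> hcarrier R2)"
  proof (intro allI impI)
    fix N1 assume h: "delta_primary R1 \<gamma>1 N1"
    have ne: "N1 \<noteq> {}" "N1 \<subseteq> hcarrier R1" "hyperideal R1 N1" "N1 \<noteq> hcarrier R1"
      using h unfolding delta_primary_def hyperideal_def by auto
    have d: "\<delta> (N1 \<times> hcarrier R2) = \<gamma>1 N1 \<times> \<gamma>2 (hcarrier R2)" using ne ne2 assms(8) by simp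
    show "phi_delta_primary (hprod R1 R2) \<phi> \<delta> (N1 \<times> hcarrier R2)"
      unfolding phi_delta_primary_def
    proof (intro conjI ballI impI)
      fix a b assume ab: "a \<in> hcarrier (hprod R1 R2)" "b \<in> hcarrier (hprod R1 R2)"
        and "hmul (hprod R1 R2) a b \<in> N1 \<times> hcarrier R2 \<and> hmul (hprod R1 R2) a b \<notin> \<phi> (N1 \<times> hcarrier R2)"
      then have "hmul R1 (fst a) (fst b) \<in> N1" by (auto simp: hprod_simps)
      then have "fst a \<in> N1 \<or> fst b \<in> \<gamma>1 N1" using h ab unfolding delta_primary_def
        by (auto simp: hprod_simps)
      then show "a \<in> N1 \<times> hcarrier R2 \<or> b \<in> \<delta> (N1 \<times> hcarrier R2)"
        using ab d g2[OF C2] by (auto simp: hprod_simps mem_Times_iff)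
    qed (use ne ne2 C2 prod_ideal[of R1 N1 R2 "hcarrier R2"] prod_proper1[of N1 R1 "hcarrier R2" R2] in auto)
  qed
  have P3: "\<forall>N2. delta_primary R2 \<gamma>2 N2 \<longrightarrow>
              phi_delta_primary (hprod R1 R2) \<phi> \<delta> (hcarrier R1 \<times> N2)"
  proof (intro allI impI)
    fix N2 assume h: "delta_primary R2 \<gamma>2 N2"
    have ne: "N2 \<noteq> {}" "N2 \<subseteq> hcarrier R2" "hyperideal R2 N2" "N2 \<noteq> hcarrier R2"
      using h unfolding delta_primary_def hyperideal_def by auto
    have d: "\<delta> (hcarrier R1 \<times> N2) = \<gamma>1 (hcarrier R1) \<times> \<gamma>2 N2" using ne ne1 assms(8) by simp
    show "phi_delta_primary (hprod R1 R2) \<phi> \<delta> (hcarrier R1 \<times> N2)"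
      unfolding phi_delta_primary_def
    proof (intro conjI ballI impI)
      fix a b assume ab: "a \<in> hcarrier (hprod R1 R2)" "b \<in> hcarrier (hprod R1 R2)"
        and "hmul (hprod R1 R2) a b \<in> hcarrier R1 \<times> N2 \<and> hmul (hprod R1 R2) a b \<notin> \<phi> (hcarrier R1 \<times> N2)"
      then have "hmul R2 (snd a) (snd b) \<in> N2" by (auto simp: hprod_simps)
      then have "snd a \<in> N2 \<or> snd b \<in> \<gamma>2 N2" using h ab unfolding delta_primary_def
        by (auto simp: hprod_simps)
      then show "a \<in> hcarrier R1 \<times> N2 \<or> b \<in> \<delta> (hcarrier R1 \<times> N2)"
        using ab d g1[OF C1] by (auto simp: hprod_simps mem_Times_iff)
    qed (use ne ne1 C1 prod_ideal[of R1 "hcarrier R1" R2 N2] prod_proper2[of N2 R2 "hcarrier R1" R1] in auto)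
  qed
  have P4: "\<forall>N1. phi_delta_primary R1 \<phi>1 \<gamma>1 N1 \<and> \<phi>2 (hcarrier R2) = hcarrier R2 \<longrightarrow>
              phi_delta_primary (hprod R1 R2) \<phi> \<delta> (N1 \<times> hcarrier R2)"
  proof (intro allI impI)
    fix N1 assume h: "phi_delta_primary R1 \<phi>1 \<gamma>1 N1 \<and> \<phi>2 (hcarrier R2) = hcarrier R2"
    have ne: "N1 \<noteq> {}" "N1 \<subseteq> hcarrier R1" "hyperideal R1 N1" "N1 \<noteq> hcarrier R1"
      using h unfolding phi_delta_primary_def hyperideal_def by auto
    have d: "\<delta> (N1 \<times> hcarrier R2) = \<gamma>1 N1 \<times> \<gamma>2 (hcarrier R2)" using ne ne2 assms(8) by simp
    have p: "\<phi> (N1 \<times> hcarrier R2) = \<phi>1 N1 \<times> hcarrier R2" using ne ne2 h assms(7) by simp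
    show "phi_delta_primary (hprod R1 R2) \<phi> \<delta> (N1 \<times> hcarrier R2)"
      unfolding phi_delta_primary_def
    proof (intro conjI ballI impI)
      fix a b assume ab: "a \<in> hcarrier (hprod R1 R2)" "b \<in> hcarrier (hprod R1 R2)"
        and hh: "hmul (hprod R1 R2) a b \<in> N1 \<times> hcarrier R2 \<and> hmul (hprod R1 R2) a b \<notin> \<phi> (N1 \<times> hcarrier R2)"
      then have "hmul R1 (fst a) (fst b) \<in> N1" "hmul R1 (fst a) (fst b) \<notin> \<phi>1 N1"
        using p by (auto simp: hprod_simps)
      then have "fst a \<in> N1 \<or> fst b \<in> \<gamma>1 N1" using h ab unfolding phi_delta_primary_def
        by (auto simp: hprod_simps)
      then show "a \<in> N1 \<times> hcarrier R2 \<or> b \<in> \<delta> (N1 \<times> hcarrier R2)"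
        using ab d g2[OF C2] by (auto simp: hprod_simps mem_Times_iff)
    qed (use ne ne2 C2 prod_ideal[of R1 N1 R2 "hcarrier R2"] prod_proper1[of N1 R1 "hcarrier R2" R2] in auto)
  qed
  have P5: "\<forall>N2. phi_delta_primary R2 \<phi>2 \<gamma>2 N2 \<and> \<phi>1 (hcarrier R1) = hcarrier R1 \<longrightarrow>
              phi_delta_primary (hprod R1 R2) \<phi> \<delta> (hcarrier R1 \<times> N2)"
  proof (intro allI impI)
    fix N2 assume h: "phi_delta_primary R2 \<phi>2 \<gamma>2 N2 \<and> \<phi>1 (hcarrier R1) = hcarrier R1"
    have ne: "N2 \<noteq> {}" "N2 \<subseteq> hcarrier R2" "hyperideal R2 N2" "N2 \<noteq> hcarrier R2"
      using h unfolding phi_delta_primary_def hyperideal_def by auto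
    have d: "\<delta> (hcarrier R1 \<times> N2) = \<gamma>1 (hcarrier R1) \<times> \<gamma>2 N2" using ne ne1 assms(8) by simp
    have p: "\<phi> (hcarrier R1 \<times> N2) = hcarrier R1 \<times> \<phi>2 N2" using ne ne1 h assms(7) by simp
    show "phi_delta_primary (hprod R1 R2) \<phi> \<delta> (hcarrier R1 \<times> N2)"
      unfolding phi_delta_primary_def
    proof (intro conjI ballI impI)
      fix a b assume ab: "a \<in> hcarrier (hprod R1 R2)" "b \<in> hcarrier (hprod R1 R2)"
        and hh: "hmul (hprod R1 R2) a b \<in> hcarrier R1 \<times> N2 \<and> hmul (hprod R1 R2) a b \<notin> \<phi> (hcarrier R1 \<times> N2)"
      then have "hmul R2 (snd a) (snd b) \<in> N2" "hmul R2 (snd a) (snd b) \<notin> \<phi>2 N2"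
        using p by (auto simp: hprod_simps)
      then have "snd a \<in> N2 \<or> snd b \<in> \<gamma>2 N2" using h ab unfolding phi_delta_primary_def
        by (auto simp: hprod_simps)
      then show "a \<in> hcarrier R1 \<times> N2 \<or> b \<in> \<delta> (hcarrier R1 \<times> N2)"
        using ab d g1[OF C1] by (auto simp: hprod_simps mem_Times_iff)
    qed (use ne ne1 C1 prod_ideal[of R1 "hcarrier R1" R2 N2] prod_proper2[of N2 R2 "hcarrier R1" R1] in auto)
  qed
  show ?thesis using P1 P2 P3 P4 P5 by (intro conjI)
qed

end
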